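(* Let $\beta=\prod_{j=1}^{r}\sigma_1^{a_j}\sigma_2^{b_j}\in B_3$ with $r\ge 2$ and all $a_j,b_j\ge 1$. Suppose either (1) $\beta$ has two or more trivial syllables, or (2) $\beta$ has a trivial syllable whose two adjacent syllables (taken cyclically, so that $\sigma_1^{a_1}$ and $\sigma_2^{b_r}$ are adjacent) have minimum exponent equal to $2$. Then $\beta$ is conjugate to $[1,3]^{3a}\gamma$ for some integer $a\ge 0$ and some $\gamma\in B_3$ with $\rho(\gamma)<r$. In case (2), or when $\beta$ has two isolated trivial syllables, one has $a\ge 1$. Moreover, $\gamma$ may be chosen as $\gamma=\prod_{j=1}^{s}\sigma_1^{c_j}\sigma_2^{d_j}$ with $s<r$ and $c_j,d_j\ge 2$ for all $j\ge 2$, where: if $s\ge 2$ then $c_1,d_1\ge 1$ and $\gamma$ may be chosen to have either no trivial syllables, or exactly one trivial syllable whose two adjacent syllables each have exponent at least three; if $s=1$ then $c_1,d_1\ge 0$; and if $s=0$ then $\gamma=1$.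
   Context: $B_3$ is the 3-strand braid group with generators $\sigma_1,\sigma_2$; $[1,3]=\sigma_1\sigma_2$. For a word $\beta=\prod_{j=1}^{r}\sigma_1^{e_{2j-1}}\sigma_2^{e_{2j}}$ with $r\ge 1$ and all $e_k\neq 0$, each factor $\sigma_i^{e_k}$ is a syllable; a syllable is trivial if its exponent is $1$; a trivial syllable is isolated if both adjacent syllables (viewed cyclically) are non-trivial. The rank of such $\beta$ is $\rho(\beta)=r$; the identity has rank $0$ and $\sigma_i^a$ ($a\neq 0$) has rank $1$. *)

theory Defs
  imports Main
begin

text \<open>The braid group B_3 via its presentation: words in the letters sigma_i^{+-1}
  modulo free reduction and the braid relation s1 s2 s1 = s2 s1 s2.\<close>

datatype gen = S1 | S2

type_synonym bword = "(gen \<times> bool) list"  (* (generator, True = positive letter) *)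

inductive beq :: "bword \<Rightarrow> bword \<Rightarrow> bool" where
  beq_refl: "beq w w"
| beq_sym: "beq u v \<Longrightarrow> beq v u"
| beq_trans: "beq u v \<Longrightarrow> beq v w \<Longrightarrow> beq u w"
| beq_free: "beq (u @ [(g, b), (g, \<not> b)] @ v) (u @ v)"
| beq_braid: "beq (u @ [(S1, True), (S2, True), (S1, True)] @ v)
                  (u @ [(S2, True), (S1, True), (S2, True)] @ v)"

definition winv :: "bword \<Rightarrow> bword" where
  "winv w = rev (map (\<lambda>(g, b). (g, \<not> b)) w)"

definition conj_B3 :: "bword \<Rightarrow> bword \<Rightarrow> bool" where
  "conj_B3 u v \<longleftrightarrow> (\<exists>w. beq (w @ u @ winv w) v)"

definition sig_pow :: "gen \<Rightarrow> nat \<Rightarrow> bword" where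
  "sig_pow g n = replicate n (g, True)"

text \<open>[1,3]^(3a) = (sigma_1 sigma_2)^(3a)\<close>
definition delta13_pow :: "nat \<Rightarrow> bword" where
  "delta13_pow n = concat (replicate n [(S1, True), (S2, True)])"

definition word_of :: "(nat \<times> nat) list \<Rightarrow> bword" where
  "word_of ps = concat (map (\<lambda>(x, y). sig_pow S1 x @ sig_pow S2 y) ps)"

definition syl :: "(nat \<times> nat) list \<Rightarrow> nat list" where
  "syl ps = concat (map (\<lambda>(x, y). [x, y]) ps)"

definition nxt :: "nat list \<Rightarrow> nat \<Rightarrow> nat" where
  "nxt e k = e ! ((k + 1) mod length e)"

definition prv :: "nat list \<Rightarrow> nat \<Rightarrow> nat" where
  "prv e k = e ! ((k + length e - 1) mod length e)"

definition trivial_syls :: "(nat \<times> nat) list \<Rightarrow> nat set" where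
  "trivial_syls ps = {k. k < length (syl ps) \<and> syl ps ! k = 1}"

definition isolated_trivial_syls :: "(nat \<times> nat) list \<Rightarrow> nat set" where
  "isolated_trivial_syls ps = {k \<in> trivial_syls ps. prv (syl ps) k \<noteq> 1 \<and> nxt (syl ps) k \<noteq> 1}"

end

theory Submission
  imports Defs "HOL-Library.Multiset"
begin



lemma beq_ctx: "beq u v \<Longrightarrow> beq (x @ u @ y) (x @ v @ y)"
proof (induction rule: beq.induct)
  case (beq_refl w) then show ?case by (rule beq.beq_refl)
next
  case (beq_sym u v) then show ?case by (metis beq.beq_sym)
next
  case (beq_trans u v w) then show ?case by (metis beq.beq_trans)
next
  case (beq_free u g b v)
  then show ?case using beq.beq_free[of "x@u" g b "v@y"] by simp
next
  case (beq_braid u v)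
  then show ?case using beq.beq_braid[of "x@u" "v@y"] by simp
qed

declare beq_trans[trans]

lemma beq_app: "beq u u' \<Longrightarrow> beq v v' \<Longrightarrow> beq (u@v) (u'@v')"
proof -
  assume 1: "beq u u'" and 2: "beq v v'"
  have "beq ([] @ u @ v) ([] @ u' @ v)" by (rule beq_ctx[OF 1])
  moreover have "beq (u' @ v @ []) (u' @ v' @ [])" by (rule beq_ctx[OF 2])
  ultimately show ?thesis using beq_trans by simp
qed

lemma beq_pre: "beq v v' \<Longrightarrow> beq (u@v) (u@v')"
  by (simp add: beq_app beq_refl)
lemma beq_suf: "beq u u' \<Longrightarrow> beq (u@v) (u'@v)"
  by (simp add: beq_app beq_refl)

lemma winv_Nil[simp]: "winv [] = []" by (simp add: winv_def)
lemma winv_append[simp]: "winv (u@v) = winv v @ winv u" by (simp add: winv_def)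
lemma winv_Cons: "winv ((g,b)#w) = winv w @ [(g, \<not>b)]" by (simp add: winv_def)
lemma winv_winv[simp]: "winv (winv w) = w"
  by (induction w) (auto simp: winv_def)

lemma beq_cancel: "beq (w @ winv w) []"
proof (induction w)
  case Nil then show ?case by (simp add: beq_refl)
next
  case (Cons a w)
  obtain g b where a: "a = (g,b)" by fastforce
  have 1: "beq ([a] @ (w @ winv w) @ [(g,\<not>b)]) [a, (g,\<not>b)]"
    using beq_ctx[OF Cons.IH, of "[a]" "[(g,\<not>b)]"] by simp
  have 2: "beq [a, (g,\<not>b)] []" using beq_free[of "[]" g b "[]"] a by simp
  have "beq ([a] @ (w @ winv w) @ [(g,\<not>b)]) []" using beq_trans[OF 1 2] .
  then show ?case using a by (simp add: winv_Cons)
qed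

lemma beq_cancel': "beq (winv w @ w) []"
  using beq_cancel[of "winv w"] by simp

lemma conj_refl: "conj_B3 u u"
  unfolding conj_B3_def by (rule exI[of _ "[]"]) (simp add: beq_refl)

lemma conj_beq: "beq u v \<Longrightarrow> conj_B3 u v"
  unfolding conj_B3_def by (rule exI[of _ "[]"]) simp

lemma conj_trans: "conj_B3 u v \<Longrightarrow> conj_B3 v x \<Longrightarrow> conj_B3 u x"
proof -
  assume "conj_B3 u v" "conj_B3 v x"
  then obtain w1 w2 where 1: "beq (w1@u@winv w1) v" and 2: "beq (w2@v@winv w2) x"
    unfolding conj_B3_def by blast
  have "beq (w2@(w1@u@winv w1)@winv w2) (w2@v@winv w2)" using beq_ctx[OF 1] .
  then have "beq ((w2@w1)@u@winv (w2@w1)) x" using 2 by (simp add: beq_trans)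
  then show ?thesis unfolding conj_B3_def by blast
qed

declare conj_trans[trans]

lemma conj_beq_right: "conj_B3 u v \<Longrightarrow> beq v v' \<Longrightarrow> conj_B3 u v'"
  using conj_trans conj_beq by blast

lemma conj_rot: "conj_B3 (x@y) (y@x)"
proof -
  have "beq ((winv x @ x) @ (y@x)) ([] @ (y@x))" using beq_suf[OF beq_cancel'] .
  then show ?thesis unfolding conj_B3_def by (intro exI[of _ "winv x"]) simp
qed

lemma conj_central:
  assumes Z: "\<And>u. beq (Z@u) (u@Z)" and c: "conj_B3 u v"
  shows "conj_B3 (Z@u) (Z@v)"
proof -
  obtain w where 1: "beq (w@u@winv w) v" using c unfolding conj_B3_def by blast
  have "beq (w@Z) (Z@w)" using Z beq_sym by blast
  then have "beq (w@(Z@u)@winv w) (Z@(w@u@winv w))"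
    using beq_suf[of "w@Z" "Z@w" "u@winv w"] by simp
  also have "beq (Z@(w@u@winv w)) (Z@v)" using beq_pre[OF 1] .
  finally show ?thesis unfolding conj_B3_def by blast
qed

fun other :: "gen \<Rightarrow> gen" where "other S1 = S2" | "other S2 = S1"
lemma other_other[simp]: "other (other g) = g" by (cases g) auto

fun wg :: "gen \<Rightarrow> nat list \<Rightarrow> bword" where
  "wg g [] = []" | "wg g (x#xs) = sig_pow g x @ wg (other g) xs"

definition D :: bword where "D = [(S1,True),(S2,True),(S1,True)]"
definition Dk :: "nat \<Rightarrow> bword" where "Dk k = concat (replicate k D)"
definition C :: "nat \<Rightarrow> nat list \<Rightarrow> bword" where "C k d = Dk k @ wg S1 d"
definition flipw :: "bword \<Rightarrow> bword" where "flipw w = map (\<lambda>(g,b). (other g, b)) w"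

lemma flipw_flipw[simp]: "flipw (flipw w) = w"
  by (induction w) (auto simp: flipw_def)

lemma letter_push: "beq ([(g,True)] @ D) (D @ [(other g, True)])"
proof (cases g)
  case S1 then show ?thesis using beq_braid[of "[(S1,True)]" "[]"] by (simp add: D_def)
next
  case S2 then show ?thesis using beq_braid[of "[]" "[(S1,True)]"] by (simp add: D_def beq_sym)
qed

lemma letter_push_neg: "beq ([(g,False)] @ D) (D @ [(other g, False)])"
proof -
  have "beq ([(g,False)] @ D) (([(g,False)] @ D) @ [(other g,True),(other g, \<not>True)] @ [])"
    using beq_free[of "[(g,False)] @ D" "other g" True "[]"] beq_sym by simp
  also have "beq (([(g,False)] @ D) @ [(other g,True),(other g, \<not>True)] @ [])
                 ([(g,False)] @ ([(g,True)] @ D) @ [(other g,False)])"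
    using beq_ctx[OF beq_sym[OF letter_push[of g]], of "[(g,False)]" "[(other g,False)]"] by simp
  also have "beq ([(g,False)] @ ([(g,True)] @ D) @ [(other g,False)]) ([] @ D @ [(other g,False)])"
    using beq_free[of "[]" g False "D @ [(other g,False)]"] by simp
  finally show ?thesis by simp
qed

lemma word_push: "beq (w @ D) (D @ flipw w)"
proof (induction w)
  case Nil then show ?case by (simp add: flipw_def beq_refl)
next
  case (Cons a w)
  obtain g b where a: "a = (g,b)" by fastforce
  have "beq ([a] @ (w @ D)) ([a] @ (D @ flipw w))" using beq_pre[OF Cons.IH] .
  also have "beq ([a] @ D @ flipw w) (D @ [(other g, b)] @ flipw w)"
    using beq_suf[OF letter_push[of g]] beq_suf[OF letter_push_neg[of g]] a by (cases b) auto
  finally show ?case using a by (simp add: flipw_def)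
qed

lemma D2_central: "beq (D@D@u) (u@D@D)"
proof -
  have "beq (u@D@D) (D @ flipw u @ D)" using beq_suf[OF word_push[of u], of D] by simp
  also have "beq (D @ flipw u @ D) (D @ D @ u)" using beq_pre[OF word_push[of "flipw u"], of D] by simp
  finally show ?thesis by (rule beq_sym)
qed

lemma delta3: "beq (delta13_pow 3) (D@D)"
  using beq_braid[of "[(S1,True),(S2,True),(S1,True)]" "[]"]
  by (simp add: delta13_pow_def D_def numeral_eq_Suc beq_sym)

lemma delta3_central: "beq (delta13_pow 3 @ u) (u @ delta13_pow 3)"
proof -
  have "beq (delta13_pow 3 @ u) ((D@D)@u)" using beq_suf[OF delta3] .
  also have "beq ((D@D)@u) (u@(D@D))" using D2_central by simp
  also have "beq (u@(D@D)) (u @ delta13_pow 3)" using beq_pre[OF beq_sym[OF delta3]] .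
  finally show ?thesis .
qed

lemma delta_add: "delta13_pow (3 * Suc a) = delta13_pow 3 @ delta13_pow (3*a)"
  unfolding delta13_pow_def by (simp add: replicate_add)

lemma Dk2: "Dk 2 = D @ D" by (simp add: Dk_def numeral_eq_Suc)

lemma conj_via_D: "beq (D @ X) (Y @ D) \<Longrightarrow> conj_B3 X Y"
proof -
  assume h: "beq (D @ X) (Y @ D)"
  have "beq ((D @ X) @ winv D) ((Y @ D) @ winv D)" using beq_suf[OF h] .
  also have "beq ((Y @ D) @ winv D) (Y @ [])" using beq_pre[OF beq_cancel[of D], of Y] by simp
  finally show ?thesis unfolding conj_B3_def by (intro exI[of _ D]) simp
qed

lemma flipw_sig[simp]: "flipw (sig_pow g n) = sig_pow (other g) n"
  by (simp add: flipw_def sig_pow_def)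
lemma flipw_append[simp]: "flipw (u@v) = flipw u @ flipw v" by (simp add: flipw_def)
lemma flipw_Nil[simp]: "flipw [] = []" by (simp add: flipw_def)
lemma flipw_wg[simp]: "flipw (wg g d) = wg (other g) d"
  by (induction d arbitrary: g) auto

lemma Dk_comm: "D @ Dk k = Dk k @ D"
  by (induction k) (simp_all add: Dk_def)

lemma Dk_comm': "D @ Dk k @ x = Dk k @ D @ x"
  using Dk_comm[of k] by (metis append_assoc)

lemma Dk_Suc: "Dk (Suc k) = D @ Dk k" by (simp add: Dk_def)

lemma wg_push: "beq (wg g d @ D) (D @ wg (other g) d)"
  using word_push[of "wg g d"] by simp

lemma funpow_other: "(other ^^ k) g = (if even k then g else other g)"
  by (induction k) auto

lemma wg_push_k: "beq (wg g d @ Dk k) (Dk k @ wg ((other^^k) g) d)"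
proof (induction k arbitrary: g)
  case 0 then show ?case by (simp add: Dk_def beq_refl)
next
  case (Suc k)
  have "beq (wg g d @ D @ Dk k) (D @ wg (other g) d @ Dk k)" using beq_suf[OF wg_push[of g d], of "Dk k"] by simp
  also have "beq (D @ wg (other g) d @ Dk k) (D @ Dk k @ wg ((other^^k) (other g)) d)"
    using beq_pre[OF Suc.IH[of "other g"], of D] by simp
  finally show ?case by (simp add: Dk_Suc funpow_Suc_right del: funpow.simps)
qed

lemma conj_flip: "conj_B3 (Dk k @ wg g d) (Dk k @ wg (other g) d)"
proof (rule conj_via_D)
  have "beq (D @ Dk k @ wg g d) (Dk k @ (D @ wg g d))" by (simp add: Dk_comm' beq_refl)
  also have "beq (Dk k @ (D @ wg g d)) (Dk k @ (wg (other g) d @ D))"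
    using beq_pre[OF beq_sym[OF wg_push[of "other g" d]]] by simp
  finally show "beq (D @ Dk k @ wg g d) ((Dk k @ wg (other g) d) @ D)" by simp
qed

lemma conj_C_any: "conj_B3 (Dk k @ wg g d) (C k d)"
  unfolding C_def using conj_flip[of k S2 d] by (cases g) (auto simp: conj_refl)


lemma wg_snoc: "wg g (d@[x]) = wg g d @ sig_pow ((other^^(length d)) g) x"
  by (induction d arbitrary: g) (simp_all add: funpow_Suc_right del: funpow.simps)

lemma conj_sym: "conj_B3 u v \<Longrightarrow> conj_B3 v u"
proof -
  assume "conj_B3 u v"
  then obtain w where 1: "beq (w@u@winv w) v" unfolding conj_B3_def by blast
  have "beq (winv w @ (w@u@winv w) @ w) (winv w @ v @ w)" using beq_ctx[OF 1] .
  moreover have "beq ((winv w @ w) @ u @ (winv w @ w)) ([] @ u @ [])"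
    using beq_app[OF beq_cancel'[of w] beq_app[OF beq_refl[of u] beq_cancel'[of w]]] .
  ultimately have A: "beq (winv w @ w @ u @ winv w @ w) (winv w @ v @ w)"
     and B: "beq (winv w @ w @ u @ winv w @ w) u" by simp_all
  have "beq (winv w @ v @ winv (winv w)) u" using beq_trans[OF beq_sym[OF A] B] by simp
  then show ?thesis unfolding conj_B3_def by blast
qed

lemma L_rot:
  assumes "even (length (x#d) + k)"
  shows "conj_B3 (C k (x#d)) (C k (d@[x]))"
proof -
  let ?g = "(other^^k) S2"
  have "conj_B3 (C k (x#d)) (wg S2 d @ (Dk k @ sig_pow S1 x))"
    using conj_rot[of "Dk k @ sig_pow S1 x" "wg S2 d"] by (simp add: C_def)
  also have "beq (wg S2 d @ (Dk k @ sig_pow S1 x)) (Dk k @ wg ?g d @ sig_pow S1 x)"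
    using beq_suf[OF wg_push_k[of S2 d k], of "sig_pow S1 x"] by simp
  then have "conj_B3 (wg S2 d @ (Dk k @ sig_pow S1 x)) (Dk k @ wg ?g (d@[x]))"
    using assms by (simp add: wg_snoc conj_beq funpow_other split: if_splits)
  also have "conj_B3 (Dk k @ wg ?g (d@[x])) (C k (d@[x]))" by (rule conj_C_any)
  finally show ?thesis .
qed


lemma L_rotate:
  assumes "even (length d + k)"
  shows "conj_B3 (C k d) (C k (rotate m d))"
proof (induction m)
  case 0 then show ?case by (simp add: conj_refl)
next
  case (Suc m)
  have "conj_B3 (C k (rotate m d)) (C k (rotate1 (rotate m d)))"
  proof (cases "rotate m d")
    case Nil then show ?thesis by (simp add: conj_refl)
  next
    case (Cons x xs)
    have "even (length (x#xs) + k)" using assms Cons by (metis length_rotate)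
    then show ?thesis using L_rot[of x xs k] Cons by simp
  qed
  then show ?case using Suc.IH by (simp add: conj_trans)
qed

lemma sp_Suc: "sig_pow g (Suc n) = (g,True) # sig_pow g n" by (simp add: sig_pow_def)
lemma sp_Suc_snoc: "sig_pow g (Suc n) = sig_pow g n @ [(g,True)]"
  by (simp add: sig_pow_def replicate_append_same)
lemma sp_0[simp]: "sig_pow g 0 = []" by (simp add: sig_pow_def)
lemma sp_1: "sig_pow g (Suc 0) = [(g,True)]" by (simp add: sig_pow_def)
lemma sp_add: "sig_pow g (m+n) = sig_pow g m @ sig_pow g n" by (simp add: sig_pow_def replicate_add)

lemma sp_push: "beq (sig_pow g n @ D) (D @ sig_pow (other g) n)"
  using word_push[of "sig_pow g n"] by simp

lemma L_M:
  assumes "x \<ge> 1" "y \<ge> 1"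
  shows "conj_B3 (C k (x#1#y#c)) (C (Suc k) ((x-1)#(y-1)#c))"
proof -
  obtain x' y' where xy: "x = Suc x'" "y = Suc y'" using assms by (cases x; cases y) auto
  have e: "C k (x#1#y#c) = Dk k @ (sig_pow S1 x' @ D) @ (sig_pow S1 y' @ wg S2 c)"
    unfolding C_def xy wg.simps sp_Suc_snoc[of S1 x'] sp_Suc[of S1 y'] One_nat_def sp_1 D_def by (simp add: sp_Suc)
  have "beq (Dk k @ (sig_pow S1 x' @ D) @ (sig_pow S1 y' @ wg S2 c))
            (Dk k @ (D @ sig_pow S2 x') @ (sig_pow S1 y' @ wg S2 c))"
    using beq_ctx[OF sp_push[of S1 x']] by simp
  also have "Dk k @ (D @ sig_pow S2 x') @ (sig_pow S1 y' @ wg S2 c) = Dk (Suc k) @ wg S2 ((x-1)#(y-1)#c)"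
    by (simp add: xy Dk_Suc Dk_comm')
  finally have "conj_B3 (C k (x#1#y#c)) (Dk (Suc k) @ wg S2 ((x-1)#(y-1)#c))"
    using e conj_beq by simp
  then show ?thesis using conj_C_any conj_trans by blast
qed

lemma sl: "beq (sig_pow S1 x @ [(S2,True),(S1,True)]) ([(S2,True),(S1,True)] @ sig_pow S2 x)"
proof (induction x)
  case 0 then show ?case by (simp add: beq_refl)
next
  case (Suc x)
  have "beq ([(S1,True)] @ (sig_pow S1 x @ [(S2,True),(S1,True)])) ([(S1,True)] @ ([(S2,True),(S1,True)] @ sig_pow S2 x))"
    using beq_pre[OF Suc.IH] .
  also have "beq ([(S1,True)] @ ([(S2,True),(S1,True)] @ sig_pow S2 x)) ([(S2,True),(S1,True)] @ sig_pow S2 (Suc x))"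
    using beq_braid[of "[]" "sig_pow S2 x"] by (simp add: sp_Suc)
  finally show ?case by (simp add: sp_Suc)
qed

lemma L_slide: "beq (C k (x#1#1#y#c)) (C k (0#1#1#(x+y)#c))"
proof -
  have "beq (Dk k @ (sig_pow S1 x @ [(S2,True),(S1,True)]) @ (sig_pow S2 y @ wg S1 c))
            (Dk k @ ([(S2,True),(S1,True)] @ sig_pow S2 x) @ (sig_pow S2 y @ wg S1 c))"
    using beq_ctx[OF sl] .
  then show ?thesis by (simp add: C_def sp_add sp_1)
qed

lemma L_merge: "C k (x#0#y#c) = C k ((x+y)#c)"
  by (simp add: C_def sp_add)


lemma mset_rot: "mset (rotate n xs) = mset xs"
proof (induction n)
  case (Suc n) then show ?case by (cases "rotate n xs") (simp_all add: rotate_Suc)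
qed simp

lemma list3: "3 \<le> length e \<Longrightarrow> e = e!0 # e!1 # e!2 # drop 3 e"
  by (cases e; cases "tl e"; cases "tl (tl e)") auto
lemma list4: "4 \<le> length e \<Longrightarrow> e = e!0 # e!1 # e!2 # e!3 # drop 4 e"
  by (cases e; cases "tl e"; cases "tl (tl e)"; cases "tl (tl (tl e))") auto

lemma rot_nth:
  assumes "i < length d"
  shows "rotate (j + length d - 1) d ! i = d ! ((j + length d - 1 + i) mod length d)"
  using assms by (simp add: nth_rotate)

lemma rot_facts:
  assumes "j < length d" "3 \<le> length d"
  defines "e \<equiv> rotate (j + length d - 1) d"
  shows "e!0 = prv d j" "e!1 = d!j" "e!2 = nxt d j" "length e = length d" "mset e = mset d"
proof -
  let ?n = "length d"
  have dne: "d \<noteq> []" using assms by auto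
  have r0: "e!0 = d!((j + ?n - 1 + 0) mod ?n)" using rot_nth[of 0 d j] assms dne unfolding e_def by simp
  then show "e!0 = prv d j" by (simp add: prv_def)
  have r1: "e!1 = d!((j + ?n - 1 + 1) mod ?n)" using rot_nth[of 1 d j] assms dne unfolding e_def by simp
  have "j + ?n - 1 + 1 = j + ?n" using assms by simp
  then show "e!1 = d!j" using r1 assms by simp
  have r2: "e!2 = d!((j + ?n - 1 + 2) mod ?n)" using rot_nth[of 2 d j] assms dne unfolding e_def by simp
  have "j + ?n - 1 + 2 = (j + 1) + ?n" using assms by simp
  then have m: "(j + ?n - 1 + 2) mod ?n = (j + 1) mod ?n" by (simp only: mod_add_self2)
  show "e!2 = nxt d j" using r2 m unfolding nxt_def by (simp only:)
  show "length e = length d" "mset e = mset d" by (simp_all add: e_def mset_rot)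
qed

lemma M_gen:
  assumes "even (length d + k)" "3 \<le> length d" "j < length d" "d!j = 1" "prv d j \<ge> 1" "nxt d j \<ge> 1"
  shows "\<exists>rest. conj_B3 (C k d) (C (Suc k) ((prv d j - 1) # (nxt d j - 1) # rest))
            \<and> mset d = {#prv d j, 1, nxt d j#} + mset rest"
proof -
  define e where "e = rotate (j + length d - 1) d"
  note f = rot_facts[OF assms(3,2), folded e_def]
  define rest where "rest = drop 3 e"
  have e: "e = prv d j # 1 # nxt d j # rest" using list3[of e] f assms unfolding rest_def by simp
  have "conj_B3 (C k d) (C k e)" unfolding e_def by (rule L_rotate[OF assms(1)])
  also have "conj_B3 (C k e) (C (Suc k) ((prv d j - 1) # (nxt d j - 1) # rest))"
    unfolding e by (rule L_M[OF assms(5,6)])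
  finally have "conj_B3 (C k d) (C (Suc k) ((prv d j - 1) # (nxt d j - 1) # rest))" .
  moreover have "mset d = {#prv d j, 1, nxt d j#} + mset rest"
    using f(5) unfolding e by simp
  ultimately show ?thesis by blast
qed

lemma slide_gen:
  assumes "even (length d + k)" "4 \<le> length d" "j < length d" "d!j = 1" "nxt d j = 1"
  shows "\<exists>d'. conj_B3 (C k d) (C k d') \<and> length d' = length d \<and> sum_list d' = sum_list d \<and> 0 \<in> set d'"
proof -
  define e where "e = rotate (j + length d - 1) d"
  note f = rot_facts[OF assms(3), folded e_def]
  define p where "p = e!0"
  define q where "q = e!3"
  define rest where "rest = drop 4 e"
  have e: "e = p # 1 # 1 # q # rest" using list4[of e] f assms unfolding p_def q_def rest_def by simp
  have "conj_B3 (C k d) (C k e)" unfolding e_def by (rule L_rotate[OF assms(1)])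
  also have "conj_B3 (C k e) (C k (0#1#1#(p+q)#rest))"
    unfolding e by (rule conj_beq[OF L_slide])
  finally have c: "conj_B3 (C k d) (C k (0#1#1#(p+q)#rest))" .
  have "sum_list e = sum_list d" unfolding e_def by (metis mset_rot sum_mset_sum_list)
  then have "sum_list (0#1#1#(p+q)#rest) = sum_list d" unfolding e by simp
  moreover have "length (0#1#1#(p+q)#rest) = length d" using f(4) assms unfolding e by simp
  ultimately show ?thesis using c by (intro exI[of _ "0#1#1#(p+q)#rest"]) simp
qed

lemma merge_gen:
  assumes "even (length d + k)" "3 \<le> length d" "0 \<in> set d"
  shows "\<exists>d'. conj_B3 (C k d) (C k d') \<and> length d' + 2 = length d \<and> sum_list d' = sum_list d"
proof -
  obtain j where j: "j < length d" "d!j = 0" using assms(3) by (metis in_set_conv_nth)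
  define e where "e = rotate (j + length d - 1) d"
  note f = rot_facts[OF j(1) assms(2), folded e_def]
  define p where "p = e!0"
  define q where "q = e!2"
  define rest where "rest = drop 3 e"
  have e: "e = p # 0 # q # rest" using list3[of e] f assms j unfolding p_def q_def rest_def by simp
  have c: "conj_B3 (C k d) (C k e)" unfolding e_def by (rule L_rotate[OF assms(1)])
  have "C k e = C k ((p + q) # rest)" unfolding e by (rule L_merge)
  moreover have "sum_list e = sum_list d" unfolding e_def by (metis mset_rot sum_mset_sum_list)
  moreover have "length e = length d" using f(4) .
  ultimately show ?thesis using c unfolding e
    by (intro exI[of _ "(p + q) # rest"]) simp
qed


definition ones :: "nat list \<Rightarrow> nat set" where "ones c = {k. k < length c \<and> c!k = 1}"

lemma finite_ones: "finite (ones c)" unfolding ones_def by simp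

lemma count_ones: "count (mset c) 1 = card (ones c)"
proof -
  have "{i. i < length c \<and> 1 = c!i} = ones c" unfolding ones_def by auto
  then show ?thesis by (simp add: count_mset count_list_eq_length_filter length_filter_conv_card)
qed

lemma prv_in: "e \<noteq> [] \<Longrightarrow> prv e k \<in> set e" unfolding prv_def by simp
lemma nxt_in: "e \<noteq> [] \<Longrightarrow> nxt e k \<in> set e" unfolding nxt_def by simp

lemma mset_facts:
  fixes p q :: nat and rest d :: "nat list"
  assumes "mset d = {#p,1,q#} + mset rest"
  shows "length d = length rest + 3" "sum_list d = p + 1 + q + sum_list rest" "set rest \<subseteq> set d"
        "count (mset d) 1 = count {#p,1,q#} 1 + count (mset rest) 1"
proof -
  show "length d = length rest + 3" using arg_cong[OF assms, of size] by simp
  show "sum_list d = p + 1 + q + sum_list rest" using arg_cong[OF assms, of sum_mset]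
    by (simp add: sum_mset_sum_list)
  show "set rest \<subseteq> set d" using arg_cong[OF assms, of set_mset] by auto
  show "count (mset d) 1 = count {#p,1,q#} 1 + count (mset rest) 1" using assms by simp
qed

lemma DM:
  assumes ev: "even (length d)" and n4: "4 \<le> length d" and pos: "\<forall>x\<in>set d. x \<ge> 1"
    and j: "j < length d" "d!j = 1" and pq: "prv d j \<ge> 2" "nxt d j \<ge> 2"
    and alt: "prv d j = 2 \<or> nxt d j = 2 \<or> count (mset d) 1 \<ge> 2"
  shows "\<exists>d''. conj_B3 (C 0 d) (C 2 d'') \<and> length d'' + 2 = length d \<and> sum_list d'' + 6 = sum_list d"
proof -
  let ?p = "prv d j" and ?q = "nxt d j"
  obtain rest where r1: "conj_B3 (C 0 d) (C 1 ((?p - 1) # (?q - 1) # rest))"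
      and r2: "mset d = {#?p, 1, ?q#} + mset rest"
    using M_gen[of d 0 j] ev n4 j pq by auto
  note mf = mset_facts[OF r2]
  define d1 where "d1 = (?p - 1) # (?q - 1) # rest"
  have pos1: "\<forall>x\<in>set d1. x \<ge> 1" using pos mf(3) pq unfolding d1_def by auto
  have len1: "length d1 + 1 = length d" using mf(1) unfolding d1_def by simp
  have "1 \<in> set d1"
  proof (cases "?p = 2 \<or> ?q = 2")
    case True then show ?thesis unfolding d1_def by auto
  next
    case False
    then have "count (mset d) 1 \<ge> 2" using alt by auto
    moreover have "count {#?p,1,?q#} 1 = 1" using pq by simp
    ultimately have "count (mset rest) 1 \<ge> 1" using mf(4) by simp
    then show ?thesis unfolding d1_def by (metis One_nat_def count_mset_0_iff le_numeral_extra(2) list.set_intros(2)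
        not_one_le_zero)
  qed
  then obtain j' where j': "j' < length d1" "d1!j' = 1" by (metis in_set_conv_nth)
  have "d1 \<noteq> []" using j'(1) by (cases d1) auto
  then have "prv d1 j' \<in> set d1" "nxt d1 j' \<in> set d1" using prv_in nxt_in by blast+
  then have "prv d1 j' \<ge> 1" "nxt d1 j' \<ge> 1" using pos1 by auto
  then obtain rest2 where s1: "conj_B3 (C 1 d1) (C 2 ((prv d1 j' - 1) # (nxt d1 j' - 1) # rest2))"
      and s2: "mset d1 = {#prv d1 j', 1, nxt d1 j'#} + mset rest2"
    using M_gen[of d1 1 j'] ev n4 len1 j' by (auto simp: numeral_2_eq_2)
  note mf2 = mset_facts[OF s2]
  have "conj_B3 (C 0 d) (C 2 ((prv d1 j' - 1) # (nxt d1 j' - 1) # rest2))"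
    using r1 s1 conj_trans unfolding d1_def by blast
  moreover have "length ((prv d1 j' - 1) # (nxt d1 j' - 1) # rest2) + 2 = length d"
    using mf2(1) len1 by simp
  moreover have "sum_list ((prv d1 j' - 1) # (nxt d1 j' - 1) # rest2) + 6 = sum_list d"
  proof -
    have s1: "sum_list d1 = (?p - 1) + (?q - 1) + sum_list rest" unfolding d1_def by simp
    have s3: "sum_list ((prv d1 j' - 1) # (nxt d1 j' - 1) # rest2) = (prv d1 j' - 1) + (nxt d1 j' - 1) + sum_list rest2"
      by simp
    show ?thesis using mf2(2) mf(2) s1 s3 pq \<open>prv d1 j' \<ge> 1\<close> \<open>nxt d1 j' \<ge> 1\<close> by arith
  qed
  ultimately show ?thesis by blast
qed

fun pairs :: "nat list \<Rightarrow> (nat \<times> nat) list" where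
  "pairs (x#y#r) = (x,y) # pairs r" | "pairs _ = []"

lemma syl_Cons[simp]: "syl ((x,y)#ps) = x # y # syl ps" by (simp add: syl_def)
lemma syl_Nil[simp]: "syl [] = []" by (simp add: syl_def)
lemma word_of_Cons[simp]: "word_of ((x,y)#ps) = sig_pow S1 x @ sig_pow S2 y @ word_of ps" by (simp add: word_of_def)
lemma word_of_Nil[simp]: "word_of [] = []" by (simp add: word_of_def)

lemma syl_pairs: "even (length c) \<Longrightarrow> syl (pairs c) = c"
  by (induction c rule: pairs.induct) auto
lemma word_pairs: "even (length c) \<Longrightarrow> word_of (pairs c) = wg S1 c"
  by (induction c rule: pairs.induct) auto
lemma length_pairs: "length (pairs c) = length c div 2"
  by (induction c rule: pairs.induct) auto
lemma nth_pairs: "j < length (pairs c) \<Longrightarrow> pairs c ! j = (c!(2*j), c!(2*j+1))"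
proof (induction c arbitrary: j rule: pairs.induct)
  case (1 x y r j) then show ?case by (cases j) auto
qed auto

lemma word_syl: "word_of ps = wg S1 (syl ps)"
  by (induction ps) auto
lemma length_syl: "length (syl ps) = 2 * length ps"
  by (induction ps) auto
lemma set_syl: "\<forall>(x, y) \<in> set ps. x \<ge> 1 \<and> y \<ge> 1 \<Longrightarrow> \<forall>x\<in>set (syl ps). x \<ge> (1::nat)"
  by (induction ps) auto

lemma C0: "C 0 c = wg S1 c" by (simp add: C_def Dk_def)

definition NFq :: "(nat \<times> nat) list \<Rightarrow> bool" where
  "NFq qs \<longleftrightarrow> (\<forall>j. 1 \<le> j \<and> j < length qs \<longrightarrow> fst (qs ! j) \<ge> 2 \<and> snd (qs ! j) \<ge> 2)
         \<and> (length qs \<ge> 2 \<longrightarrow>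
              fst (qs ! 0) \<ge> 1 \<and> snd (qs ! 0) \<ge> 1
            \<and> (trivial_syls qs = {}
               \<or> (card (trivial_syls qs) = 1
                  \<and> (\<forall>k \<in> trivial_syls qs. prv (syl qs) k \<ge> 3 \<and> nxt (syl qs) k \<ge> 3))))"

lemma NF_from:
  assumes ev: "even (length c)" and pos: "\<forall>x\<in>set c. x \<ge> 1"
    and ge2: "\<forall>i. 0 < i \<and> i < length c \<longrightarrow> c!i \<ge> 2"
    and z: "c!0 = 1 \<longrightarrow> prv c 0 \<ge> 3 \<and> nxt c 0 \<ge> 3"
  shows "NFq (pairs c)"
proof -
  have ts: "trivial_syls (pairs c) = ones c" unfolding trivial_syls_def ones_def using syl_pairs[OF ev] by simp
  have sub: "ones c \<subseteq> {0}" using ge2 unfolding ones_def by force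
  have A: "\<forall>j. 1 \<le> j \<and> j < length (pairs c) \<longrightarrow> fst (pairs c ! j) \<ge> 2 \<and> snd (pairs c ! j) \<ge> 2"
  proof (intro allI impI)
    fix j assume h: "1 \<le> j \<and> j < length (pairs c)"
    then have "2*j+1 < length c" using length_pairs[of c] ev by auto
    then show "fst (pairs c ! j) \<ge> 2 \<and> snd (pairs c ! j) \<ge> 2" using nth_pairs[of j c] h ge2 by auto
  qed
  have B: "length (pairs c) \<ge> 2 \<longrightarrow> fst (pairs c ! 0) \<ge> 1 \<and> snd (pairs c ! 0) \<ge> 1"
  proof
    assume "length (pairs c) \<ge> 2"
    then have "1 < length c" using length_pairs[of c] by auto
    moreover have "pairs c \<noteq> []" using \<open>2 \<le> length (pairs c)\<close> by (cases "pairs c") auto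
    moreover have "pairs c ! 0 = (c!0, c!1)" using nth_pairs[of 0 c] \<open>pairs c \<noteq> []\<close> by simp
    moreover have "c!0 \<in> set c" by (rule nth_mem, rule less_trans[OF zero_less_one \<open>1 < length c\<close>])
    moreover have "c!1 \<in> set c" by (rule nth_mem) (use \<open>1 < length c\<close> in simp)
    ultimately show "fst (pairs c ! 0) \<ge> 1 \<and> snd (pairs c ! 0) \<ge> 1" using pos by simp
  qed
  have "trivial_syls (pairs c) = {} \<or> (card (trivial_syls (pairs c)) = 1
                  \<and> (\<forall>k \<in> trivial_syls (pairs c). prv (syl (pairs c)) k \<ge> 3 \<and> nxt (syl (pairs c)) k \<ge> 3))"
  proof (cases "ones c = {}")
    case True then show ?thesis using ts by simp
  next
    case False
    then have "ones c = {0}" using sub by blast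
    then show ?thesis using ts z syl_pairs[OF ev] unfolding ones_def by auto
  qed
  then show ?thesis unfolding NFq_def using A B by blast
qed


definition mu :: "nat list \<Rightarrow> nat" where
  "mu c = 2 * (sum_list c + length c) + (if 0 \<in> set c then 0 else 1)"

lemma rot_ne:
  fixes i j n :: nat
  assumes "i < n" "j < n" "0 < i" shows "(j + i) mod n \<noteq> j"
proof (cases "j + i < n")
  case True then have "(j + i) mod n = j + i" by (rule mod_less)
  then show ?thesis using assms by simp
next
  case False
  then have "(j + i) mod n = j + i - n" using assms by (simp add: le_mod_geq)
  moreover have "j + i - n \<noteq> j" using assms False by arith
  ultimately show ?thesis by simp
qed

lemma central_step:
  assumes "conj_B3 (wg S1 d) (delta13_pow (3*a) @ word_of qs)"
  shows "conj_B3 (C 2 d) (delta13_pow (3*Suc a) @ word_of qs)"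
proof -
  have "conj_B3 (C 2 d) (delta13_pow 3 @ wg S1 d)"
    using conj_beq[OF beq_suf[OF beq_sym[OF delta3]]] by (simp add: C_def Dk2)
  also have "conj_B3 (delta13_pow 3 @ wg S1 d) (delta13_pow 3 @ (delta13_pow (3*a) @ word_of qs))"
    by (rule conj_central[OF delta3_central assms])
  finally show ?thesis by (simp only: delta_add append_assoc)
qed

lemma L:
  "even (length c) \<Longrightarrow> \<exists>a qs. conj_B3 (wg S1 c) (delta13_pow (3*a) @ word_of qs)
        \<and> 2 * length qs \<le> length c \<and> NFq qs"
proof (induction "mu c" arbitrary: c rule: less_induct)
  case less
  let ?n = "length c"
  show ?case
  proof (cases "?n = 0")
    case True then show ?thesis
      by (intro exI[of _ 0] exI[of _ "[]"]) (simp add: conj_refl delta13_pow_def NFq_def)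
  next
    case n0: False
    show ?thesis
    proof (cases "?n = 2")
      case True
      then obtain x y where c: "c = [x,y]"
        by (metis One_nat_def Suc_1 length_0_conv length_Suc_conv)
      show ?thesis
        by (intro exI[of _ 0] exI[of _ "[(x,y)]"]) (simp add: c conj_refl delta13_pow_def NFq_def)
    next
      case n2: False
      have n4: "4 \<le> ?n" using n0 n2 less.prems by presburger
      have ev0: "even (?n + 0)" using less.prems by simp
      show ?thesis
      proof (cases "0 \<in> set c")
        case True
        obtain c' where c': "conj_B3 (C 0 c) (C 0 c')" "length c' + 2 = ?n" "sum_list c' = sum_list c"
          using merge_gen[OF ev0 _ True] n4 by auto
        have "mu c' < mu c" using c' True unfolding mu_def by auto
        moreover have "even (length c')" using c'(2) less.prems by presburger
        ultimately obtain a qs where "conj_B3 (wg S1 c') (delta13_pow (3*a) @ word_of qs)"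
            "2 * length qs \<le> length c'" "NFq qs" using less.hyps by blast
        then show ?thesis using c' conj_trans by (metis C0 le_add1 order_trans)
      next
        case nz: False
        have pos: "\<forall>x\<in>set c. x \<ge> 1" using nz by (metis less_one not_le)
        have cne: "c \<noteq> []" using n4 by auto
        have pn: "prv c j \<ge> 1" "nxt c j \<ge> 1" for j using pos prv_in[OF cne] nxt_in[OF cne] by auto
        show ?thesis
        proof (cases "card (ones c) \<le> 1 \<and> (\<forall>j\<in>ones c. prv c j \<ge> 3 \<and> nxt c j \<ge> 3)")
          case NF: True
          obtain m where m: "(ones c = {} \<and> m = 0) \<or> (ones c = {m})"
            using NF finite_ones by (metis card_0_eq card_1_singletonE le_Suc_eq le_zero_eq One_nat_def)
          define c' where "c' = rotate m c"
          have ev': "even (length c')" using less.prems by (simp add: c'_def)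
          have cc: "conj_B3 (C 0 c) (C 0 c')" unfolding c'_def by (rule L_rotate[OF ev0])
          have pos': "\<forall>x\<in>set c'. x \<ge> 1" using pos by (simp add: c'_def)
          have "NFq (pairs c')"
          proof (rule NF_from[OF ev' pos'])
            show "\<forall>i. 0 < i \<and> i < length c' \<longrightarrow> c'!i \<ge> 2"
            proof (intro allI impI)
              fix i assume i: "0 < i \<and> i < length c'"
              have "c'!i \<noteq> 1"
              proof (cases "ones c = {}")
                case True
                then have "c'!i = c!((m+i) mod ?n)" "(m+i) mod ?n < ?n" using i m n4 cne
                  by (simp_all add: c'_def nth_rotate)
                then show ?thesis using True unfolding ones_def by auto
              next
                case False
                then have om: "ones c = {m}" using m by auto
                then have mn: "m < ?n" unfolding ones_def by auto
                have "c'!i = c!((m+i) mod ?n)" using i by (simp add: c'_def nth_rotate)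
                moreover have "(m+i) mod ?n \<noteq> m" using rot_ne[of i ?n m] i mn by (simp add: c'_def)
                moreover have "(m+i) mod ?n < ?n" using cne by simp
                ultimately show ?thesis using om unfolding ones_def by auto
              qed
              moreover have "c'!i \<ge> 1" using pos' i by auto
              ultimately show "c'!i \<ge> 2" by simp
            qed
            show "c'!0 = 1 \<longrightarrow> prv c' 0 \<ge> 3 \<and> nxt c' 0 \<ge> 3"
            proof
              assume h: "c'!0 = 1"
              have c0: "c'!0 = c!(m mod ?n)" using cne n4 by (simp add: c'_def nth_rotate)
              have "m mod ?n \<in> ones c" using h c0 n4 cne unfolding ones_def by simp
              then have om: "ones c = {m}" and mn: "m < ?n" using m by (auto simp: ones_def)
              have "prv c' 0 = c!((m + (?n - 1)) mod ?n)" using cne n4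
                by (simp add: c'_def prv_def nth_rotate)
              also have "\<dots> = prv c m" using n4 by (simp add: prv_def)
              finally have 1: "prv c' 0 = prv c m" .
              have "nxt c' 0 = c!((m + 1) mod ?n)" using cne n4
                by (simp add: c'_def nxt_def nth_rotate)
              also have "\<dots> = nxt c m" by (simp add: nxt_def)
              finally have 2: "nxt c' 0 = nxt c m" .
              show "prv c' 0 \<ge> 3 \<and> nxt c' 0 \<ge> 3" using NF om 1 2 by auto
            qed
          qed
          then show ?thesis using cc ev' length_pairs[of c'] word_pairs[OF ev']
            by (intro exI[of _ 0] exI[of _ "pairs c'"]) (simp add: C0 delta13_pow_def c'_def)
        next
          case notNF: False
          show ?thesis
          proof (cases "\<exists>j\<in>ones c. nxt c j = 1 \<or> prv c j = 1")
            case True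
            obtain j where j: "j < ?n" "c!j = 1" "nxt c j = 1"
            proof -
              obtain j where j: "j \<in> ones c" "nxt c j = 1 \<or> prv c j = 1" using True by blast
              show ?thesis
              proof (cases "nxt c j = 1")
                case True then show ?thesis using that j unfolding ones_def by auto
              next
                case False
                let ?j' = "(j + ?n - 1) mod ?n"
                have "c!?j' = 1" using j False unfolding prv_def by auto
                moreover have "nxt c ?j' = c!j"
                proof -
                  have "(?j' + 1) mod ?n = (j + ?n - 1 + 1) mod ?n" by (simp add: mod_add_left_eq mod_Suc_eq)
                  also have "\<dots> = (j + ?n) mod ?n"
                  proof -
                    have "j + ?n - 1 + 1 = j + ?n" using n4 by arith
                    then show ?thesis by (simp only:)
                  qed
                  also have "\<dots> = j" using j n4 unfolding ones_def by simp
                  finally show ?thesis unfolding nxt_def by simp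
                qed
                ultimately show ?thesis using that[of ?j'] j n4 cne unfolding ones_def by auto
              qed
            qed
            obtain c' where c': "conj_B3 (C 0 c) (C 0 c')" "length c' = ?n" "sum_list c' = sum_list c" "0 \<in> set c'"
              using slide_gen[OF ev0 n4 j] by auto
            have "mu c' < mu c" using c' nz unfolding mu_def by auto
            moreover have "even (length c')" using c'(2) less.prems by presburger
            ultimately obtain a qs where "conj_B3 (wg S1 c') (delta13_pow (3*a) @ word_of qs)"
                "2 * length qs \<le> length c'" "NFq qs" using less.hyps by blast
            then show ?thesis using c' conj_trans by (metis C0)
          next
            case no1: False
            have nb: "prv c j \<ge> 2 \<and> nxt c j \<ge> 2" if "j \<in> ones c" for j
              using no1 that pn[of j] by (metis One_nat_def Suc_1 Suc_leI le_neq_implies_less)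
            obtain j where j: "j \<in> ones c" "prv c j = 2 \<or> nxt c j = 2 \<or> count (mset c) 1 \<ge> 2"
            proof (cases "card (ones c) \<ge> 2")
              case True
              then have "ones c \<noteq> {}" by auto
              then show ?thesis using that True count_ones by auto
            next
              case False
              then obtain j where "j \<in> ones c" "\<not> (prv c j \<ge> 3 \<and> nxt c j \<ge> 3)" using notNF by auto
              then show ?thesis using that nb by force
            qed
            obtain d'' where d: "conj_B3 (C 0 c) (C 2 d'')" "length d'' + 2 = ?n" "sum_list d'' + 6 = sum_list c"
              using DM[OF less.prems n4 pos _ _ _ _ j(2)] j(1) nb[OF j(1)] unfolding ones_def by auto
            have "mu d'' < mu c" using d nz unfolding mu_def by auto
            moreover have "even (length d'')" using d(2) less.prems by presburger
            ultimately obtain a qs where h: "conj_B3 (wg S1 d'') (delta13_pow (3*a) @ word_of qs)"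
                "2 * length qs \<le> length d''" "NFq qs" using less.hyps by blast
            have "conj_B3 (wg S1 c) (delta13_pow (3*Suc a) @ word_of qs)"
              using d(1) central_step[OF h(1)] conj_trans C0 by metis
            then show ?thesis using h d(2) by (intro exI[of _ "Suc a"] exI[of _ qs]) simp
          qed
        qed
      qed
    qed
  qed
qed

lemma adj_one:
  assumes j: "j \<in> ones c" and h: "nxt c j = 1 \<or> prv c j = 1" and cne: "c \<noteq> []"
  shows "\<exists>j'. j' < length c \<and> c!j' = 1 \<and> nxt c j' = 1"
proof (cases "nxt c j = 1")
  case True then show ?thesis using j unfolding ones_def by auto
next
  case False
  let ?n = "length c"
  let ?j' = "(j + ?n - 1) mod ?n"
  have "c!?j' = 1" using h False unfolding prv_def by auto
  moreover have "nxt c ?j' = c!j"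
  proof -
    have "(?j' + 1) mod ?n = (j + ?n - 1 + 1) mod ?n" by (simp add: mod_add_left_eq mod_Suc_eq)
    also have "\<dots> = (j + ?n) mod ?n"
    proof -
      have "j + ?n - 1 + 1 = j + ?n" using cne by (cases c) auto
      then show ?thesis by (simp only:)
    qed
    also have "\<dots> = j" using j unfolding ones_def by simp
    finally show ?thesis unfolding nxt_def by simp
  qed
  moreover have "?j' < ?n" using cne by simp
  ultimately show ?thesis using j unfolding ones_def by auto
qed

theorem proposition2p8:
  fixes ps :: "(nat \<times> nat) list"
  assumes r2: "length ps \<ge> 2"
    and pos: "\<forall>(x, y) \<in> set ps. x \<ge> 1 \<and> y \<ge> 1"
    and hyp: "card (trivial_syls ps) \<ge> 2 \<or>
              (\<exists>k \<in> trivial_syls ps. min (prv (syl ps) k) (nxt (syl ps) k) = 2)"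
  shows "\<exists>(a::nat) (qs :: (nat \<times> nat) list).
           length qs < length ps
         \<and> conj_B3 (word_of ps) (delta13_pow (3 * a) @ word_of qs)
         \<and> (((\<exists>k \<in> trivial_syls ps. min (prv (syl ps) k) (nxt (syl ps) k) = 2)
              \<or> card (isolated_trivial_syls ps) \<ge> 2) \<longrightarrow> a \<ge> 1)
         \<and> (\<forall>j. 1 \<le> j \<and> j < length qs \<longrightarrow> fst (qs ! j) \<ge> 2 \<and> snd (qs ! j) \<ge> 2)
         \<and> (length qs \<ge> 2 \<longrightarrow>
              fst (qs ! 0) \<ge> 1 \<and> snd (qs ! 0) \<ge> 1
            \<and> (trivial_syls qs = {}
               \<or> (card (trivial_syls qs) = 1
                  \<and> (\<forall>k \<in> trivial_syls qs. prv (syl qs) k \<ge> 3 \<and> nxt (syl qs) k \<ge> 3))))"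
proof -
  define e where "e = syl ps"
  have le: "length e = 2 * length ps" by (simp add: e_def length_syl)
  have ev: "even (length e)" using le by simp
  have ev0: "even (length e + 0)" using ev by simp
  have n4: "4 \<le> length e" using le r2 by simp
  have ene: "e \<noteq> []" using n4 by (cases e) auto
  have pos': "\<forall>x\<in>set e. x \<ge> 1" using set_syl[OF pos] by (simp add: e_def)
  have ts: "trivial_syls ps = ones e" by (simp add: trivial_syls_def ones_def e_def)
  have wo: "word_of ps = C 0 e" by (simp add: word_syl C0 e_def)
  have pn: "prv e j \<ge> 1" "nxt e j \<ge> 1" for j using pos' prv_in[OF ene] nxt_in[OF ene] by auto
  show ?thesis
  proof (cases "\<exists>j\<in>ones e. prv e j \<ge> 2 \<and> nxt e j \<ge> 2 \<and> (prv e j = 2 \<or> nxt e j = 2 \<or> count (mset e) 1 \<ge> 2)")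
    case True
    then obtain j where j: "j \<in> ones e" "prv e j \<ge> 2" "nxt e j \<ge> 2"
        "prv e j = 2 \<or> nxt e j = 2 \<or> count (mset e) 1 \<ge> 2" by blast
    obtain d'' where d: "conj_B3 (C 0 e) (C 2 d'')" "length d'' + 2 = length e" "sum_list d'' + 6 = sum_list e"
      using DM[OF ev n4 pos' _ _ j(2,3,4)] j(1) unfolding ones_def by auto
    have "even (length d'')" using d(2) ev by presburger
    then obtain a qs where h: "conj_B3 (wg S1 d'') (delta13_pow (3*a) @ word_of qs)"
        "2 * length qs \<le> length d''" "NFq qs" using L by blast
    have c: "conj_B3 (word_of ps) (delta13_pow (3*Suc a) @ word_of qs)"
      using wo d(1) central_step[OF h(1)] conj_trans by metis
    have "length qs < length ps" using h(2) d(2) le by simp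
    then show ?thesis using c h(3) unfolding NFq_def by (intro exI[of _ "Suc a"] exI[of _ qs]) simp
  next
    case False
    have nb: "prv e j \<ge> 2 \<and> nxt e j \<ge> 2" if "prv e j \<noteq> 1" "nxt e j \<noteq> 1" for j
      using pn[of j] that by auto
    have notH: "\<not> ((\<exists>k \<in> trivial_syls ps. min (prv (syl ps) k) (nxt (syl ps) k) = 2)
              \<or> card (isolated_trivial_syls ps) \<ge> 2)"
    proof
      assume H: "(\<exists>k \<in> trivial_syls ps. min (prv (syl ps) k) (nxt (syl ps) k) = 2)
              \<or> card (isolated_trivial_syls ps) \<ge> 2"
      then show False
      proof
        assume "\<exists>k \<in> trivial_syls ps. min (prv (syl ps) k) (nxt (syl ps) k) = 2"
        then obtain k where k: "k \<in> ones e" "min (prv e k) (nxt e k) = 2" using ts e_def by auto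
        then have "prv e k \<ge> 2" "nxt e k \<ge> 2" "prv e k = 2 \<or> nxt e k = 2"
          by (auto simp: min_def split: if_splits)
        then show False using False k by blast
      next
        assume iso: "card (isolated_trivial_syls ps) \<ge> 2"
        have sub: "isolated_trivial_syls ps \<subseteq> ones e" using ts unfolding isolated_trivial_syls_def by auto
        have "card (ones e) \<ge> 2" using card_mono[OF finite_ones sub] iso by simp
        then have cnt: "count (mset e) 1 \<ge> 2" using count_ones by simp
        have "isolated_trivial_syls ps \<noteq> {}" using iso by auto
        then obtain k where k: "k \<in> isolated_trivial_syls ps" by blast
        then have "k \<in> ones e" "prv e k \<noteq> 1" "nxt e k \<noteq> 1"
          using sub unfolding isolated_trivial_syls_def e_def by auto
        then show False using False nb cnt by blast
      qed
    qed
    have card2: "card (ones e) \<ge> 2" using hyp notH ts by auto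
    have "\<exists>j\<in>ones e. nxt e j = 1 \<or> prv e j = 1"
    proof (rule ccontr)
      assume nn: "\<not> (\<exists>j\<in>ones e. nxt e j = 1 \<or> prv e j = 1)"
      have "ones e \<noteq> {}" using card2 by auto
      then obtain j where j: "j \<in> ones e" by blast
      have "count (mset e) 1 \<ge> 2" using card2 count_ones by simp
      then show False using False nb nn j by blast
    qed
    then obtain j where j: "j \<in> ones e" "nxt e j = 1 \<or> prv e j = 1" by blast
    obtain j' where j': "j' < length e" "e!j' = 1" "nxt e j' = 1" using adj_one[OF j ene] by blast
    obtain e' where e': "conj_B3 (C 0 e) (C 0 e')" "length e' = length e" "sum_list e' = sum_list e" "0 \<in> set e'"
      using slide_gen[OF ev0 n4 j'] by auto
    have ev0': "even (length e' + 0)" using e'(2) ev by simp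
    obtain e'' where e'': "conj_B3 (C 0 e') (C 0 e'')" "length e'' + 2 = length e'"
      using merge_gen[OF ev0' _ e'(4)] e'(2) n4 by auto
    have "even (length e'')" using e''(2) e'(2) ev by presburger
    then obtain a qs where h: "conj_B3 (wg S1 e'') (delta13_pow (3*a) @ word_of qs)"
        "2 * length qs \<le> length e''" "NFq qs" using L by blast
    have c: "conj_B3 (word_of ps) (delta13_pow (3*a) @ word_of qs)"
      using wo e'(1) e''(1) h(1) conj_trans C0 by metis
    have "length qs < length ps" using h(2) e''(2) e'(2) le by simp
    then show ?thesis using c h(3) notH unfolding NFq_def by (intro exI[of _ a] exI[of _ qs]) simp
  qed
qed



end
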